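(* The price function $p$ is concave (resp. convex) on $Q$ if and only if $r$ is concave (resp. convex) on $\big(\overline p(q_h),\overline p(q_\ell)\big)$.
   Context: Let $0<q_\ell<q_h<\infty$, $Q=[q_\ell,q_h]$, and let $c$ be a real number with $0<c<q_\ell$. Let $F$ be a probability distribution on $[0,1]$ with support $[0,1]$ admitting a twice continuously differentiable density $f:(0,1)\to\mathbb{R}_{>0}$. Define $r(v)=(1-F(v))/f(v)$ and $\psi(v)=v-r(v)$ on $(0,1)$, and assume $\psi'(v)>0$ whenever $\psi(v)>0$. For $q\in Q$, $p(q)$ is the unique maximizer over $p\in\mathbb{R}$ of $(p-c)\big(1-F(p/q)\big)$, and $\overline p(q)=p(q)/q$. *)

theory Defs
  imports "HOL-Analysis.Analysis"
begin

definition inv_hazard :: "(real \<Rightarrow> real) \<Rightarrow> (real \<Rightarrow> real) \<Rightarrow> real \<Rightarrow> real" where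
  "inv_hazard F f v = (1 - F v) / f v"

definition virt_val :: "(real \<Rightarrow> real) \<Rightarrow> (real \<Rightarrow> real) \<Rightarrow> real \<Rightarrow> real" where
  "virt_val F f v = v - inv_hazard F f v"

definition opt_price :: "(real \<Rightarrow> real) \<Rightarrow> real \<Rightarrow> real \<Rightarrow> real" where
  "opt_price F c q = (THE p. \<forall>p'. (p' - c) * (1 - F (p' / q)) \<le> (p - c) * (1 - F (p / q)))"

definition norm_price :: "(real \<Rightarrow> real) \<Rightarrow> real \<Rightarrow> real \<Rightarrow> real" where
  "norm_price F c q = opt_price F c q / q"

definition C2_on :: "real set \<Rightarrow> (real \<Rightarrow> real) \<Rightarrow> bool" where
  "C2_on S g \<longleftrightarrow> (\<exists>g1 g2. (\<forall>x\<in>S. (g has_real_derivative g1 x) (at x)) \<and>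
      (\<forall>x\<in>S. (g1 has_real_derivative g2 x) (at x)) \<and> continuous_on S g2)"

end

theory Submission imports Defs begin

lemma persp:
  fixes P phi :: "real \<Rightarrow> real"
  assumes c: "0 < c" and k: "0 < k" and A: "A \<subseteq> {0<..}" and AB: "\<forall>q\<in>A. c/q \<in> B"
    and cA: "convex A" and cv: "convex_on B phi" and eq: "\<forall>q\<in>A. P q = k * q * phi (c/q)"
  shows "convex_on A P"
proof (rule convex_onI[OF _ cA])
  fix t x y :: real assume t: "0 < t" "t < 1" and x: "x \<in> A" and y: "y \<in> A"
  have xp: "x > 0" and yp: "y > 0" using A x y by auto
  define q where "q = (1-t)*x + t*y"
  have qp: "q > 0" unfolding q_def using t xp yp by (smt (verit) mult_pos_pos)
  have qA: "q \<in> A" using cA x y t unfolding q_def convex_alt by simp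
  define l where "l = t*y/q"
  have l0: "0 \<le> l" "l \<le> 1" unfolding l_def using t xp yp qp by (auto simp: q_def field_simps)
  have l1: "1 - l = (1-t)*x/q" unfolding l_def using qp by (simp add: q_def field_simps)
  have cq: "c/q = (1-l) * (c/x) + l * (c/y)" unfolding l1 l_def using qp xp yp
    by (simp add: field_simps) (simp add: q_def algebra_simps)
  have "phi (c/q) \<le> (1-l) * phi (c/x) + l * phi (c/y)"
    using convex_onD[OF cv l0, of "c/x" "c/y"] AB x y cq by simp
  then have "k*q*phi (c/q) \<le> k*q*((1-l) * phi (c/x) + l * phi (c/y))"
    using qp k by (simp add: mult_left_mono)
  also have "\<dots> = k*q*((1-t)*x/q * phi (c/x) + t*y/q * phi (c/y))"
    by (simp only: l1) (simp add: l_def)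
  also have "\<dots> = (1-t) * (k*x*phi (c/x)) + t * (k*y*phi(c/y))"
    using qp by (simp add: field_simps)
  finally show "P ((1 - t) *\<^sub>R x + t *\<^sub>R y) \<le> (1 - t) * P x + t * P y"
    using eq x y qA by (simp add: q_def)
qed

lemma inv_convex:
  fixes h psi :: "real \<Rightarrow> real"
  assumes J: "convex J" and K: "convex K"
    and hJ: "\<forall>u\<in>J. h u \<in> K \<and> psi (h u) = u" and pK: "\<forall>x\<in>K. psi x \<in> J \<and> h (psi x) = x"
    and mono: "\<forall>x\<in>K. \<forall>y\<in>K. x < y \<longrightarrow> psi x < psi y"
  shows "concave_on J h \<longleftrightarrow> convex_on K psi" "convex_on J h \<longleftrightarrow> concave_on K psi"
proof -
  have mono': "\<forall>x\<in>K. \<forall>y\<in>K. x \<le> y \<longrightarrow> psi x \<le> psi y" using mono by (metis order_le_less)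
  have hm: "\<forall>u\<in>J. \<forall>w\<in>J. u \<le> w \<longrightarrow> h u \<le> h w" using hJ mono by (metis not_le order_less_imp_le)
  show "concave_on J h \<longleftrightarrow> convex_on K psi"
  proof
    assume a: "concave_on J h"
    show "convex_on K psi"
    proof (rule convex_onI[OF _ K])
      fix t x y :: real assume t: "0 < t" "t < 1" and x: "x \<in> K" and y: "y \<in> K"
      have z: "(1-t)*x + t*y \<in> K" using K x y t unfolding convex_alt by simp
      have w: "(1-t)*psi x + t*psi y \<in> J" using J x y t pK unfolding convex_alt by simp
      have "h ((1-t)*psi x + t*psi y) \<ge> (1-t)*h (psi x) + t * h (psi y)"
        using concave_onD[OF a, of t "psi x" "psi y"] t x y pK by simp
      then have "h ((1-t)*psi x + t*psi y) \<ge> (1-t)*x + t*y" using pK x y by simp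
      then have "psi ((1-t)*x + t*y) \<le> psi (h ((1-t)*psi x + t*psi y))"
        using mono' z w hJ by blast
      then show "psi ((1 - t) *\<^sub>R x + t *\<^sub>R y) \<le> (1 - t) * psi x + t * psi y"
        using hJ w by simp
    qed
  next
    assume a: "convex_on K psi"
    show "concave_on J h" unfolding concave_on_def
    proof (rule convex_onI[OF _ J])
      fix t u w :: real assume t: "0 < t" "t < 1" and u: "u \<in> J" and w: "w \<in> J"
      have z: "(1-t)*h u + t*h w \<in> K" using K u w t hJ unfolding convex_alt by simp
      have m: "(1-t)*u + t*w \<in> J" using J u w t unfolding convex_alt by simp
      have "psi ((1-t)*h u + t*h w) \<le> (1-t)*psi (h u) + t * psi (h w)"
        using convex_onD[OF a, of t "h u" "h w"] t u w hJ by simp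
      then have "psi ((1-t)*h u + t*h w) \<le> psi (h ((1-t)*u + t*w))" using hJ u w m by simp
      then have "(1-t)*h u + t*h w \<le> h ((1-t)*u + t*w)"
        using mono z m hJ by (meson not_le)
      then show "- h ((1 - t) *\<^sub>R u + t *\<^sub>R w) \<le> (1 - t) * - h u + t * - h w" by simp
    qed
  qed
  show "convex_on J h \<longleftrightarrow> concave_on K psi"
  proof
    assume a: "convex_on J h"
    show "concave_on K psi" unfolding concave_on_def
    proof (rule convex_onI[OF _ K])
      fix t x y :: real assume t: "0 < t" "t < 1" and x: "x \<in> K" and y: "y \<in> K"
      have z: "(1-t)*x + t*y \<in> K" using K x y t unfolding convex_alt by simp
      have w: "(1-t)*psi x + t*psi y \<in> J" using J x y t pK unfolding convex_alt by simp
      have "h ((1-t)*psi x + t*psi y) \<le> (1-t)*h (psi x) + t * h (psi y)"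
        using convex_onD[OF a, of t "psi x" "psi y"] t x y pK by simp
      then have "h ((1-t)*psi x + t*psi y) \<le> (1-t)*x + t*y" using pK x y by simp
      then have "psi ((1-t)*x + t*y) \<ge> psi (h ((1-t)*psi x + t*psi y))"
        using mono' z w hJ by blast
      then show "- psi ((1 - t) *\<^sub>R x + t *\<^sub>R y) \<le> (1 - t) * - psi x + t * - psi y"
        using hJ w by simp
    qed
  next
    assume a: "concave_on K psi"
    show "convex_on J h"
    proof (rule convex_onI[OF _ J])
      fix t u w :: real assume t: "0 < t" "t < 1" and u: "u \<in> J" and w: "w \<in> J"
      have z: "(1-t)*h u + t*h w \<in> K" using K u w t hJ unfolding convex_alt by simp
      have m: "(1-t)*u + t*w \<in> J" using J u w t unfolding convex_alt by simp
      have "psi ((1-t)*h u + t*h w) \<ge> (1-t)*psi (h u) + t * psi (h w)"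
        using concave_onD[OF a, of t "h u" "h w"] t u w hJ by simp
      then have "psi ((1-t)*h u + t*h w) \<ge> psi (h ((1-t)*u + t*w))" using hJ u w m by simp
      then have "(1-t)*h u + t*h w \<ge> h ((1-t)*u + t*w)"
        using mono z m hJ by (meson not_le)
      then show "h ((1 - t) *\<^sub>R u + t *\<^sub>R w) \<le> (1 - t) * h u + t * h w" by simp
    qed
  qed
qed

lemma convex_on_Icc_from_open:
  fixes r :: "real \<Rightarrow> real"
  assumes ab: "a < b" and rc: "continuous_on {a..b} r" and cv: "convex_on {a<..<b} r"
  shows "convex_on {a..b} r"
proof (rule convex_onI)
  fix t x y :: real assume t: "0 < t" "t < 1" and x: "x \<in> {a..b}" and y: "y \<in> {a..b}"
  define m where "m = (a+b)/2"
  define X where "X e = x + e*(m-x)" for e :: real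
  define Y where "Y e = y + e*(m-y)" for e :: real
  have Xin: "X e \<in> {a..b}" if "0 \<le> e" "e \<le> 1" for e
  proof -
    have "X e = (1-e)*x + e*m" by (simp add: X_def algebra_simps)
    moreover have "(1-e)*x + e*m \<ge> (1-e)*a + e*a" using that x ab
      by (intro add_mono mult_left_mono) (auto simp: m_def)
    moreover have "(1-e)*x + e*m \<le> (1-e)*b + e*b" using that x ab
      by (intro add_mono mult_left_mono) (auto simp: m_def)
    ultimately show ?thesis by (simp add: algebra_simps)
  qed
  have Xin': "X e \<in> {a<..<b}" if "0 < e" "e \<le> 1" for e
  proof -
    have "X e = (1-e)*x + e*m" by (simp add: X_def algebra_simps)
    moreover have "(1-e)*x + e*m > (1-e)*a + e*a" using that x ab
      by (intro add_le_less_mono mult_left_mono mult_strict_left_mono) (auto simp: m_def)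
    moreover have "(1-e)*x + e*m < (1-e)*b + e*b" using that x ab
      by (intro add_le_less_mono mult_left_mono mult_strict_left_mono) (auto simp: m_def)
    ultimately show ?thesis by (simp add: algebra_simps)
  qed
  have Yin: "Y e \<in> {a..b}" if "0 \<le> e" "e \<le> 1" for e
  proof -
    have "Y e = (1-e)*y + e*m" by (simp add: Y_def algebra_simps)
    moreover have "(1-e)*y + e*m \<ge> (1-e)*a + e*a" using that y ab
      by (intro add_mono mult_left_mono) (auto simp: m_def)
    moreover have "(1-e)*y + e*m \<le> (1-e)*b + e*b" using that y ab
      by (intro add_mono mult_left_mono) (auto simp: m_def)
    ultimately show ?thesis by (simp add: algebra_simps)
  qed
  have Yin': "Y e \<in> {a<..<b}" if "0 < e" "e \<le> 1" for e
  proof -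
    have "Y e = (1-e)*y + e*m" by (simp add: Y_def algebra_simps)
    moreover have "(1-e)*y + e*m > (1-e)*a + e*a" using that y ab
      by (intro add_le_less_mono mult_left_mono mult_strict_left_mono) (auto simp: m_def)
    moreover have "(1-e)*y + e*m < (1-e)*b + e*b" using that y ab
      by (intro add_le_less_mono mult_left_mono mult_strict_left_mono) (auto simp: m_def)
    ultimately show ?thesis by (simp add: algebra_simps)
  qed
  have Zin: "(1-t)*X e + t*Y e \<in> {a..b}" if "0 \<le> e" "e \<le> 1" for e
    using convex_real_interval(5)[of a b] Xin[OF that] Yin[OF that] t unfolding convex_alt
    by simp
  have cX: "continuous_on {0..1} X" unfolding X_def by (intro continuous_intros)
  have cY: "continuous_on {0..1} Y" unfolding Y_def by (intro continuous_intros)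
  have c1: "continuous_on {0..1} (\<lambda>e. r ((1-t)*X e + t*Y e))"
    by (rule continuous_on_compose2[OF rc]) (auto intro!: continuous_intros cX cY Zin)
  have c2: "continuous_on {0..1} (\<lambda>e. (1-t)*r (X e) + t*r (Y e))"
    by (intro continuous_intros continuous_on_compose2[OF rc] cX cY) (auto intro: Xin Yin)
  have l1: "((\<lambda>e. r ((1-t)*X e + t*Y e)) \<longlongrightarrow> r ((1-t)*x + t*y)) (at_right 0)"
    using continuous_on_Icc_at_rightD[OF c1] by (simp add: X_def Y_def)
  have l2: "((\<lambda>e. (1-t)*r (X e) + t*r (Y e)) \<longlongrightarrow> (1-t)*r x + t*r y) (at_right 0)"
    using continuous_on_Icc_at_rightD[OF c2] by (simp add: X_def Y_def)
  have ev: "eventually (\<lambda>e. r ((1-t)*X e + t*Y e) \<le> (1-t)*r (X e) + t*r (Y e)) (at_right 0)"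
    using eventually_at_right_real[OF zero_less_one]
  proof (rule eventually_mono)
    fix e :: real assume "e \<in> {0<..<1}"
    then show "r ((1-t)*X e + t*Y e) \<le> (1-t)*r (X e) + t*r (Y e)"
      using convex_onD[OF cv, of t "X e" "Y e"] t Xin' Yin' by simp
  qed
  show "r ((1 - t) *\<^sub>R x + t *\<^sub>R y) \<le> (1 - t) * r x + t * r y"
    using tendsto_le[OF trivial_limit_at_right_real l2 l1 ev] by simp
qed (simp add: convex_real_interval)

lemma concave_on_Icc_from_open:
  fixes r :: "real \<Rightarrow> real"
  assumes ab: "a < b" and rc: "continuous_on {a..b} r" and cv: "concave_on {a<..<b} r"
  shows "concave_on {a..b} r"
  using convex_on_Icc_from_open[OF ab _ cv[unfolded concave_on_def]] rc
  unfolding concave_on_def by (simp add: continuous_on_minus)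

lemma convex_id_minus:
  fixes r :: "real \<Rightarrow> real"
  shows "convex_on K (\<lambda>v. v - r v) \<longleftrightarrow> concave_on K r"
    and "concave_on K (\<lambda>v. v - r v) \<longleftrightarrow> convex_on K r"
  unfolding concave_on_iff convex_on_def
  by (auto simp: algebra_simps)

lemma psi_mono_aux:
  fixes psi :: "real \<Rightarrow> real"
  assumes cont: "continuous_on {0<..<1} psi"
    and der: "\<And>x. 0 < x \<Longrightarrow> x < 1 \<Longrightarrow> psi x > 0 \<Longrightarrow> \<exists>y. DERIV psi x :> y \<and> y > 0"
    and a: "0 < a" "a < b" "b < 1" "psi a > 0"
  shows "psi a < psi b"
proof -
  have ge: "psi x \<ge> psi a" if x: "a \<le> x" "x < 1" for x
  proof (rule ccontr)
    assume "\<not> psi x \<ge> psi a"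
    then have lt: "psi x < psi a" by simp
    then have ax: "a < x" using x by (metis order_le_less order_less_irrefl)
    define L where "L = (max 0 (psi x) + psi a)/2"
    have L: "0 < L" "psi x < L" "L < psi a" using lt a unfolding L_def by (auto simp: max_def)
    have cI: "continuous_on {a..x} psi" using a x by (intro continuous_on_subset[OF cont]) auto
    have cI': "continuous_on {a..y} psi" if "y \<le> x" for y
      using cI by (rule continuous_on_subset) (use that in auto)
    define Z where "Z = {y \<in> {a..x}. psi y = L}"
    obtain x0 where x0: "a \<le> x0" "x0 \<le> x" "psi x0 = L"
      using IVT2'[of psi x L a, OF _ _ _ cI] L ax by (meson less_imp_le)
    have Zne: "Z \<noteq> {}" using x0 unfolding Z_def by auto
    have cZ: "compact Z" unfolding compact_eq_bounded_closed
    proof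
      show "bounded Z" by (rule bounded_subset[of "{a..x}"]) (auto simp: Z_def)
      show "closed Z" unfolding Z_def by (rule continuous_closed_preimage_constant[OF cI]) auto
    qed
    obtain z where z: "z \<in> Z" and zmin: "\<forall>y\<in>Z. z \<le> y"
      using compact_attains_inf[OF cZ Zne] by blast
    have zz: "a \<le> z" "z \<le> x" "psi z = L" using z unfolding Z_def by auto
    have az: "a < z" using zz L by (metis order_le_less order_less_irrefl)
    have pos: "psi y \<ge> L" if ay: "a \<le> y" and yz: "y \<le> z" for y
    proof (rule ccontr)
      assume "\<not> psi y \<ge> L"
      then have ylt: "psi y < L" by simp
      have yx: "y \<le> x" using yz zz by linarith
      obtain w where w: "a \<le> w" "w \<le> y" "psi w = L"
        using IVT2'[of psi y L a, OF _ _ _ cI'[OF yx]] L ay ylt by (meson less_imp_le)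
      have wZ: "w \<in> Z" unfolding Z_def using w yx by auto
      have "w \<noteq> y" using w ylt by auto
      then have "w < z" using w yz by linarith
      then show False using zmin wZ by fastforce
    qed
    have "psi a < psi z"
    proof (rule DERIV_pos_imp_increasing[OF az])
      fix y assume y: "a \<le> y" "y \<le> z"
      have "0 < y" "y < 1" "0 < psi y" using y pos[OF y] L a zz x by linarith+
      then show "\<exists>d. DERIV psi y :> d \<and> d > 0" using der by blast
    qed
    then show False using zz L by simp
  qed
  show ?thesis
  proof (rule DERIV_pos_imp_increasing[OF a(2)])
    fix y assume y: "a \<le> y" "y \<le> b"
    have "0 < y" "y < 1" "0 < psi y" using y ge[of y] a by linarith+
    then show "\<exists>d. DERIV psi y :> d \<and> d > 0" using der by blast
  qed
qed

lemma opt_char: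
  fixes F f :: "real \<Rightarrow> real" and c q :: real
  assumes c: "0 < c" "c < q"
    and F_cont: "continuous_on UNIV F"
    and F_above: "\<And>x. 1 \<le> x \<Longrightarrow> F x = 1"
    and F_dens: "\<And>x. x \<in> {0<..<1} \<Longrightarrow> (F has_real_derivative f x) (at x)"
    and f_pos: "\<And>x. x \<in> {0<..<1} \<Longrightarrow> f x > 0"
    and Flt1: "\<And>x. x < 1 \<Longrightarrow> F x < 1"
    and Fle1: "\<And>x. F x \<le> 1"
    and uniq: "\<And>v w. v \<in> {0<..<1} \<Longrightarrow> w \<in> {0<..<1} \<Longrightarrow> virt_val F f v = c/q
                 \<Longrightarrow> virt_val F f w = c/q \<Longrightarrow> v = w"
  shows "opt_price F c q / q \<in> {0<..<1} \<and> virt_val F f (opt_price F c q / q) = c/q"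
proof -
  have q: "q > 0" using c by linarith
  define G where "G p = (p-c)*(1-F(p/q))" for p
  have foc: "p/q \<in> {0<..<1} \<and> virt_val F f (p/q) = c/q" if mx: "\<forall>p'. G p' \<le> G p" for p
  proof -
    define m where "m = (c+q)/2"
    have "m/q < 1" using c q by (simp add: m_def field_simps)
    then have "F (m/q) < 1" by (rule Flt1)
    moreover have "m - c > 0" using c by (simp add: m_def)
    ultimately have "G m > 0" unfolding G_def by simp
    then have Gp: "G p > 0" using mx by (meson less_le_trans)
    have pc: "p > c"
    proof (rule ccontr)
      assume "\<not> p > c"
      then have "G p \<le> 0" unfolding G_def using Fle1[of "p/q"]
        by (intro mult_nonpos_nonneg) auto
      then show False using Gp by simp
    qed
    have Fp: "F (p/q) < 1"
    proof (rule ccontr)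
      assume "\<not> F (p/q) < 1"
      then have "G p \<le> 0" unfolding G_def using pc
        by (intro mult_nonneg_nonpos) auto
      then show False using Gp by simp
    qed
    define v where "v = p/q"
    have v1: "v < 1"
    proof (rule ccontr)
      assume "\<not> v < 1"
      then have "F v = 1" by (intro F_above) simp
      then show False using Fp unfolding v_def by simp
    qed
    have v0: "v > 0" using pc c q unfolding v_def by simp
    have vI: "v \<in> {0<..<1}" using v0 v1 by simp
    have dF: "DERIV (\<lambda>p. F (p/q)) p :> f v * (1/q)"
    proof -
      have d1: "DERIV (\<lambda>x. x/q) p :> 1/q" using q by (auto intro!: derivative_eq_intros)
      have d2: "DERIV F ((\<lambda>x. x/q) p) :> f v" using F_dens[OF vI] unfolding v_def by simp
      show ?thesis using DERIV_chain2[where f=F and g="\<lambda>x. x/q" and x=p, OF d2 d1] by simp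
    qed
    have dG: "DERIV G p :> (1-0)*(1-F(p/q)) + (0 - f v * (1/q))*(p-c)"
      unfolding G_def
      by (rule DERIV_mult[OF DERIV_diff[OF DERIV_ident DERIV_const] DERIV_diff[OF DERIV_const dF]])
    have "(1-0)*(1-F(p/q)) + (0 - f v * (1/q))*(p-c) = 0"
      using DERIV_local_max[OF dG zero_less_one] mx by blast
    then have e: "1 - F v = (p - c) * f v / q" unfolding v_def by (simp add: algebra_simps)
    have fv: "f v > 0" using f_pos[OF vI] .
    have "inv_hazard F f v = (p - c) / q" unfolding inv_hazard_def e using fv by simp
    then have "virt_val F f v = c/q" unfolding virt_val_def v_def using q
      by (simp add: field_simps)
    then show ?thesis using vI unfolding v_def by simp
  qed
  have contG: "continuous_on {c..q} G" unfolding G_def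
    by (intro continuous_intros continuous_on_compose2[OF F_cont]) (use q in auto)
  obtain x0 where x0: "x0 \<in> {c..q}" "\<forall>y\<in>{c..q}. G y \<le> G x0"
    using continuous_attains_sup[OF compact_Icc _ contG] c by force
  have G0: "G x0 \<ge> 0" using x0(2)[rule_format, of c] c unfolding G_def by simp
  have mx0: "\<forall>p'. G p' \<le> G x0"
  proof
    fix y
    show "G y \<le> G x0"
    proof (cases "y < c")
      case True
      then have "G y \<le> 0" unfolding G_def using Fle1[of "y/q"]
        by (intro mult_nonpos_nonneg) auto
      then show ?thesis using G0 by simp
    next
      case nc: False
      show ?thesis
      proof (cases "y > q")
        case True
        then have "F (y/q) = 1" using q by (intro F_above) simp
        then show ?thesis using G0 unfolding G_def by simp
      next
        case False
        then show ?thesis using nc x0 by simp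
      qed
    qed
  qed
  have "opt_price F c q = x0"
    unfolding opt_price_def
  proof (rule the_equality)
    show "\<forall>p'. (p' - c) * (1 - F (p' / q)) \<le> (x0 - c) * (1 - F (x0 / q))"
      using mx0 unfolding G_def .
  next
    fix p assume "\<forall>p'. (p' - c) * (1 - F (p' / q)) \<le> (p - c) * (1 - F (p / q))"
    then have "\<forall>p'. G p' \<le> G p" unfolding G_def .
    from foc[OF this] foc[OF mx0] have "p/q = x0/q" using uniq by blast
    then show "p = x0" using q by simp
  qed
  then show ?thesis using foc[OF mx0] by simp
qed

theorem lemma10:
  fixes F f :: "real \<Rightarrow> real" and ql qh c :: real
  assumes "0 < ql" "ql < qh" "0 < c" "c < ql"
    and F_cont: "continuous_on UNIV F"
    and F_below: "\<And>x. x \<le> 0 \<Longrightarrow> F x = 0"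
    and F_above: "\<And>x. 1 \<le> x \<Longrightarrow> F x = 1"
    and F_dens: "\<And>x. x \<in> {0<..<1} \<Longrightarrow> (F has_real_derivative f x) (at x)"
    and f_pos: "\<And>x. x \<in> {0<..<1} \<Longrightarrow> f x > 0"
    and f_C2: "C2_on {0<..<1} f"
    and psi_incr: "\<And>v. v \<in> {0<..<1} \<Longrightarrow> virt_val F f v > 0 \<Longrightarrow> deriv (virt_val F f) v > 0"
  shows "(concave_on {ql..qh} (opt_price F c) \<longleftrightarrow>
            concave_on {norm_price F c qh<..<norm_price F c ql} (inv_hazard F f))
       \<and> (convex_on {ql..qh} (opt_price F c) \<longleftrightarrow>
            convex_on {norm_price F c qh<..<norm_price F c ql} (inv_hazard F f))"
proof -
  define psi where "psi = virt_val F f"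
  define r where "r = inv_hazard F f"
  define V where "V = norm_price F c"
  define P where "P = opt_price F c"
  have psi_eq: "\<And>v. psi v = v - r v" by (simp add: psi_def r_def virt_val_def)
  have psi_fun: "psi = (\<lambda>v. v - r v)" by (rule ext) (simp add: psi_eq)
  have r_fun: "r = (\<lambda>x. (1 - F x) / f x)" by (rule ext) (simp add: r_def inv_hazard_def)
  have Flt: "F x < F y" if xy: "0 \<le> x" "x < y" "y \<le> 1" for x y
  proof (rule DERIV_pos_imp_increasing_open[OF xy(2)])
    fix z assume "x < z" "z < y"
    then have "z \<in> {0<..<1}" using xy by auto
    then show "\<exists>d. DERIV F z :> d \<and> d > 0" using F_dens f_pos by blast
  qed (rule continuous_on_subset[OF F_cont], simp)
  have Flt1: "F x < 1" if "x < 1" for x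
  proof (cases "x \<le> 0")
    case True then show ?thesis using F_below by simp
  next
    case False then show ?thesis using Flt[of x 1] that F_above[of 1] by simp
  qed
  have Fle1: "F x \<le> 1" for x
    using Flt1[of x] F_above[of x] by (cases "x < 1") auto
  from f_C2 obtain f1 where f1: "\<And>x. x \<in> {0<..<1} \<Longrightarrow> (f has_real_derivative f1 x) (at x)"
    unfolding C2_on_def by blast
  have dr: "DERIV r x :> ((0 - f x) * f x - (1 - F x) * f1 x) / (f x * f x)"
    if x: "x \<in> {0<..<1}" for x
    unfolding r_fun
    by (rule DERIV_divide[OF DERIV_diff[OF DERIV_const F_dens[OF x]] f1[OF x]])
       (use f_pos[OF x] in simp)
  have dpsi: "DERIV psi x :> 1 - ((0 - f x) * f x - (1 - F x) * f1 x) / (f x * f x)"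
    if x: "x \<in> {0<..<1}" for x
    unfolding psi_fun by (rule DERIV_diff[OF DERIV_ident dr[OF x]])
  have der: "\<exists>y. DERIV psi x :> y \<and> y > 0" if "0 < x" "x < 1" "psi x > 0" for x
  proof -
    have x: "x \<in> {0<..<1}" using that by simp
    have "deriv psi x > 0" using psi_incr[OF x] that unfolding psi_def by simp
    then show ?thesis using dpsi[OF x] DERIV_imp_deriv[OF dpsi[OF x]] by auto
  qed
  have cont_psi: "continuous_on {0<..<1} psi"
    by (rule continuous_at_imp_continuous_on) (use dpsi DERIV_isCont in blast)
  have cont_r: "continuous_on {0<..<1} r"
    by (rule continuous_at_imp_continuous_on) (use dr DERIV_isCont in blast)
  have mono: "psi a < psi b" if "0 < a" "a < b" "b < 1" "psi a > 0" for a b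
    by (rule psi_mono_aux[OF cont_psi der that]) auto
  have uniq: "v = w" if "v \<in> {0<..<1}" "w \<in> {0<..<1}" "psi v = k" "psi w = k" "k > 0" for v w k
    using mono[of v w] mono[of w v] that by (cases v w rule: linorder_cases) auto
  have Vq: "V q \<in> {0<..<1} \<and> psi (V q) = c/q" if q: "q \<in> {ql..qh}" for q
  proof -
    have cq: "0 < c" "c < q" using q assms(1-4) by auto
    have "opt_price F c q / q \<in> {0<..<1} \<and> virt_val F f (opt_price F c q / q) = c/q"
    proof (rule opt_char[OF cq F_cont F_above F_dens f_pos Flt1 Fle1])
      fix v w assume "v \<in> {0<..<1}" "w \<in> {0<..<1}" "virt_val F f v = c/q" "virt_val F f w = c/q"
      then show "v = w" using uniq[of v w "c/q"] cq unfolding psi_def by simp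
    qed
    then show ?thesis unfolding V_def psi_def norm_price_def by simp
  qed
  have Pq: "P q = q * V q" if q: "q \<in> {ql..qh}" for q
    using q assms(1,2) unfolding P_def V_def norm_price_def by auto
  define g where "g s = V (c/s)" for s
  define J where "J = {c/qh..c/ql}"
  define K where "K = {V qh..V ql}"
  have qlh: "ql \<in> {ql..qh}" "qh \<in> {ql..qh}" using assms(2) by auto
  have Jpos: "u > 0" if "u \<in> J" for u
    using that assms(1-4) unfolding J_def by (auto intro: less_le_trans[of 0 "c/qh"])
  have cJ: "c/u \<in> {ql..qh}" if u: "u \<in> J" for u
  proof -
    have u0: "u > 0" using Jpos[OF u] .
    have "c/qh \<le> u" "u \<le> c/ql" using u unfolding J_def by auto
    then have "c \<le> u*qh" "u*ql \<le> c" using assms(1-4) by (auto simp: field_simps)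
    then show ?thesis using u0 by (auto simp: field_simps)
  qed
  have Jc: "c/q \<in> J" if q: "q \<in> {ql..qh}" for q
    using q assms(1-4) unfolding J_def by (auto intro: divide_left_mono)
  have V1: "V qh \<in> {0<..<1}" "psi (V qh) = c/qh" "V ql \<in> {0<..<1}" "psi (V ql) = c/ql"
    using Vq[OF qlh(1)] Vq[OF qlh(2)] by auto
  have cpos: "c/qh > 0" "c/ql > 0" using assms(1-4) by auto
  have gJ: "\<forall>u\<in>J. g u \<in> K \<and> psi (g u) = u"
  proof
    fix u assume u: "u \<in> J"
    have u0: "u > 0" using Jpos[OF u] .
    have gu: "g u \<in> {0<..<1}" "psi (g u) = u"
      using Vq[OF cJ[OF u]] u0 assms(3) unfolding g_def by auto
    have "\<not> g u < V qh"
    proof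
      assume "g u < V qh"
      then have "psi (g u) < psi (V qh)" using mono[of "g u" "V qh"] gu V1 u0 by simp
      then show False using gu V1 u unfolding J_def by simp
    qed
    moreover have "\<not> V ql < g u"
    proof
      assume "V ql < g u"
      then have "psi (V ql) < psi (g u)" using mono[of "V ql" "g u"] gu V1 cpos by simp
      then show False using gu V1 u unfolding J_def by simp
    qed
    ultimately show "g u \<in> K \<and> psi (g u) = u" using gu unfolding K_def by simp
  qed
  have psiK: "c/qh \<le> psi x \<and> psi x \<le> c/ql \<and> x \<in> {0<..<1}" if x: "x \<in> K" for x
  proof -
    have x01: "x \<in> {0<..<1}" using x V1 unfolding K_def by auto
    have 1: "c/qh \<le> psi x"
      using mono[of "V qh" x] V1 x cpos unfolding K_def by (cases "x = V qh") auto
    have "psi x \<le> c/ql"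
      using mono[of x "V ql"] V1 x cpos 1 x01 unfolding K_def by (cases "x = V ql") auto
    then show ?thesis using 1 x01 by simp
  qed
  have pK: "\<forall>x\<in>K. psi x \<in> J \<and> g (psi x) = x"
  proof
    fix x assume x: "x \<in> K"
    have pJ: "psi x \<in> J" using psiK[OF x] unfolding J_def by simp
    have "g (psi x) \<in> {0<..<1}" using gJ pJ V1 unfolding K_def by fastforce
    then have "g (psi x) = x"
      using uniq[of "g (psi x)" x "psi x"] gJ pJ psiK[OF x] cpos by auto
    then show "psi x \<in> J \<and> g (psi x) = x" using pJ by simp
  qed
  have monoK: "\<forall>x\<in>K. \<forall>y\<in>K. x < y \<longrightarrow> psi x < psi y"
  proof (intro ballI impI)
    fix x y assume "x \<in> K" "y \<in> K" "x < y"
    then show "psi x < psi y" using psiK mono[of x y] cpos by force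
  qed
  have VV: "V qh < V ql"
  proof (rule ccontr)
    assume "\<not> V qh < V ql"
    then have "V ql < V qh \<or> V ql = V qh" by auto
    then show False
    proof
      assume "V ql < V qh"
      then have "psi (V ql) < psi (V qh)" using mono[of "V ql" "V qh"] V1 cpos by simp
      moreover have "c/qh < c/ql" using assms(1-4) by (intro divide_strict_left_mono) auto
      ultimately show False using V1 by simp
    next
      assume "V ql = V qh"
      moreover have "c/qh < c/ql" using assms(1-4) by (intro divide_strict_left_mono) auto
      ultimately show False using V1 by (metis order_less_irrefl)
    qed
  qed
  have convJ: "convex J" unfolding J_def by (rule convex_real_interval)
  have convK: "convex K" unfolding K_def by (rule convex_real_interval)
  note inv = inv_convex[OF convJ convK gJ pK monoK]
  have gP: "g u = (1/c) * u * P (c/u)" if u: "u \<in> J" for u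
    using Pq[OF cJ[OF u]] Jpos[OF u] assms(3) unfolding g_def by simp
  have Pg: "P q = 1 * q * g (c/q)" if q: "q \<in> {ql..qh}" for q
    using Pq[OF q] q assms(1-4) unfolding g_def by simp
  have Jsub: "J \<subseteq> {0<..}" using Jpos by auto
  have Qsub: "{ql..qh} \<subseteq> {0<..}" using assms(1) by auto
  have cvP: "convex_on {ql..qh} P \<longleftrightarrow> convex_on J g"
  proof
    assume "convex_on {ql..qh} P"
    from persp[where k="1/c" and P=g, OF assms(3) _ Jsub _ convJ this] show "convex_on J g"
      using cJ gP assms(3) by auto
  next
    assume "convex_on J g"
    from persp[OF assms(3) zero_less_one Qsub _ convex_real_interval(5) this] show "convex_on {ql..qh} P"
      using Jc Pg by auto
  qed
  have ccP: "concave_on {ql..qh} P \<longleftrightarrow> concave_on J g"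
    unfolding concave_on_def
  proof
    assume "convex_on {ql..qh} (\<lambda>x. - P x)"
    from persp[where k="1/c" and P="\<lambda>x. - g x", OF assms(3) _ Jsub _ convJ this] show "convex_on J (\<lambda>x. - g x)"
      using cJ gP assms(3) by auto
  next
    assume "convex_on J (\<lambda>x. - g x)"
    from persp[OF assms(3) zero_less_one Qsub _ convex_real_interval(5) this] show "convex_on {ql..qh} (\<lambda>x. - P x)"
      using Jc Pg by auto
  qed
  have contK: "continuous_on K r"
    by (rule continuous_on_subset[OF cont_r]) (use psiK in auto)
  have Ksub: "{V qh<..<V ql} \<subseteq> K" unfolding K_def by auto
  have K_eq: "K = {V qh..V ql}" unfolding K_def ..
  have r1: "concave_on K r \<longleftrightarrow> concave_on {V qh<..<V ql} r"
  proof
    assume "concave_on K r"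
    then show "concave_on {V qh<..<V ql} r" unfolding concave_on_def
      by (rule convex_on_subset[OF _ Ksub convex_real_interval(8)])
  next
    assume "concave_on {V qh<..<V ql} r"
    then show "concave_on K r" unfolding K_eq
      by (rule concave_on_Icc_from_open[OF VV contK[unfolded K_eq]])
  qed
  have r2: "convex_on K r \<longleftrightarrow> convex_on {V qh<..<V ql} r"
  proof
    assume "convex_on K r"
    then show "convex_on {V qh<..<V ql} r"
      by (rule convex_on_subset[OF _ Ksub convex_real_interval(8)])
  next
    assume "convex_on {V qh<..<V ql} r"
    then show "convex_on K r" unfolding K_eq
      by (rule convex_on_Icc_from_open[OF VV contK[unfolded K_eq]])
  qed
  have "concave_on {ql..qh} P \<longleftrightarrow> concave_on {V qh<..<V ql} r"
    using ccP inv(1) convex_id_minus(1)[of K r] r1 unfolding psi_fun by simp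
  moreover have "convex_on {ql..qh} P \<longleftrightarrow> convex_on {V qh<..<V ql} r"
    using cvP inv(2) convex_id_minus(2)[of K r] r2 unfolding psi_fun by simp
  ultimately show ?thesis unfolding P_def V_def r_def by simp
qed

end
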